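(* Assume (A1)–(A6) and that the numerical integrator $\Psi$ has order $p\ge1$ in $X$ for the problems $w'(s)=f(t_n+s,w(s))$. Let $\overline{v}_n$ be the generalized solution of $\overline{v}_n'=A\overline{v}_n$, $\overline{v}_n(0)=u(t_n)$, $\partial\overline{v}_n(s)=\partial(u(t_n)+sAu(t_n))$, and let $\overline{u}_{n+1}=\Psi_k^{f,t_n}(\overline{v}_n(k))$ (one step of the modified exponential Lie–Trotter method started from the exact value). Then the local error satisfies $$\rho_{n+1}:=\overline{u}_{n+1}-u(t_{n+1})=O(k^2).$$
   Context: Let $X,Y$ be Banach spaces, $T>0$, $A:D(A)\subset X\to X$ and $\partial:D(A)\to Y$ linear operators, $f:[0,T]\times X\to X$, $g:[0,T]\to Y$, and let $u$ be the solution of $u'(t)=Au(t)+f(t,u(t))$, $u(0)=u_0$, $\partial u(t)=g(t)$, $0\le t\le T$. Standing hypotheses: (A1) $\partial$ is onto. (A2) $\ker\partial$ is dense in $X$ and the restriction $A_0$ of $A$ to $D(A_0)=\ker\partial$ generates a $C_0$-semigroup $(e^{tA_0})_{t\ge0}$ on $X$ of negative type $\omega$. (A3) For every $z\in\mathbb C$ with $\Re z>\omega$ and $v\in Y$, the problem $Ax=zx$, $\partial x=v$ has a unique solution $x=:K(z)v\in D(A)$, and $\|K(z)v\|\le C\|v\|$ with $C$ uniform for $\Re z\ge\omega_0>\omega$. (A4) $f\in C^1([0,T]\times X,X)$. (A5) $u\in C^2([0,T],X)$, $u(t)\in D(A^2)$ for all $t$, and $Au,A^2u\in C^1([0,T],X)$.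 (A6) $f(t,u(t))\in D(A)$ for all $t$ and $Af(\cdot,u(\cdot))\in C([0,T],X)$. Generalized solution: for $u_0\in X$, $v_0,v_1\in Y$, the generalized solution of $w'(s)=Aw(s)$, $w(0)=u_0$, $\partial w(s)=v_0+v_1s$ is $w(s)=e^{sA_0}(u_0-K(0)v_0)+K(0)(v_0+v_1s)-\int_0^s e^{\sigma A_0}K(0)v_1\,d\sigma$. Time step $k>0$, $t_n=nk$. For $\tau\in[0,T]$, $\Psi_k^{f,\tau}(v_0)$ denotes one step of size $k$ of a numerical integrator applied to $v'(s)=f(\tau+s,v(s))$, $v(0)=v_0$; order $p$ means $\Psi_k^{f,\tau}(v_0)-v(k)=O(k^{p+1})$ uniformly for the arguments considered. Notation $a=O(b)$ means $\|a\|\le Cb$ with $C$ independent of $k$ (small enough) and of $n$ with $0\le nk\le T$. *)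

theory Defs
  imports "HOL-Analysis.Analysis"
begin

definition linear_on_dom :: "'a::real_vector set \<Rightarrow> ('a \<Rightarrow> 'b::real_vector) \<Rightarrow> bool" where
  "linear_on_dom D L \<longleftrightarrow> subspace D \<and>
     (\<forall>x\<in>D. \<forall>y\<in>D. L (x + y) = L x + L y) \<and> (\<forall>c. \<forall>x\<in>D. L (c *\<^sub>R x) = c *\<^sub>R L x)"

definition C0_semigroup :: "(real \<Rightarrow> 'a::real_normed_vector \<Rightarrow> 'a) \<Rightarrow> bool" where
  "C0_semigroup S \<longleftrightarrow>
     (\<forall>t\<ge>0. bounded_linear (S t)) \<and> S 0 = id \<and>
     (\<forall>t\<ge>0. \<forall>s\<ge>0. S (t + s) = S t \<circ> S s) \<and>
     (\<forall>x. continuous_on {0..} (\<lambda>t. S t x))"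

definition generates :: "'a::real_normed_vector set \<Rightarrow> ('a \<Rightarrow> 'a) \<Rightarrow> (real \<Rightarrow> 'a \<Rightarrow> 'a) \<Rightarrow> bool" where
  "generates D G S \<longleftrightarrow> C0_semigroup S \<and>
     D = {x. \<exists>y. ((\<lambda>h. (1 / h) *\<^sub>R (S h x - x)) \<longlongrightarrow> y) (at_right 0)} \<and>
     (\<forall>x\<in>D. ((\<lambda>h. (1 / h) *\<^sub>R (S h x - x)) \<longlongrightarrow> G x) (at_right 0))"

definition of_type :: "(real \<Rightarrow> 'a::real_normed_vector \<Rightarrow> 'a) \<Rightarrow> real \<Rightarrow> bool" where
  "of_type S \<omega> \<longleftrightarrow> (\<exists>M. \<forall>t\<ge>0. \<forall>x. norm (S t x) \<le> M * exp (\<omega> * t) * norm x)"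

definition C1_on :: "real set \<Rightarrow> (real \<Rightarrow> 'a::real_normed_vector) \<Rightarrow> bool" where
  "C1_on I h \<longleftrightarrow> (\<exists>h'. (\<forall>t\<in>I. (h has_vector_derivative h' t) (at t within I)) \<and> continuous_on I h')"

definition C2_on :: "real set \<Rightarrow> (real \<Rightarrow> 'a::real_normed_vector) \<Rightarrow> bool" where
  "C2_on I h \<longleftrightarrow> (\<exists>h'. (\<forall>t\<in>I. (h has_vector_derivative h' t) (at t within I)) \<and> C1_on I h')"

definition C1_time_space :: "real \<Rightarrow> (real \<Rightarrow> 'a::real_normed_vector \<Rightarrow> 'a) \<Rightarrow> bool" where
  "C1_time_space T f \<longleftrightarrow> (\<exists>f' :: real \<times> 'a \<Rightarrow> (real \<times> 'a) \<Rightarrow>\<^sub>L 'a.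
     (\<forall>p\<in>{0..T} \<times> UNIV. ((\<lambda>(t, x). f t x) has_derivative blinfun_apply (f' p)) (at p within {0..T} \<times> UNIV)) \<and>
     continuous_on ({0..T} \<times> UNIV) f')"

text \<open>Generalized solution of w' = A w, w(0) = u0, \<partial> w(s) = v0 + s v1.\<close>
definition gen_sol :: "(real \<Rightarrow> 'a::banach \<Rightarrow> 'a) \<Rightarrow> (real \<Rightarrow> 'b \<Rightarrow> 'a) \<Rightarrow> 'a \<Rightarrow> 'b::real_vector \<Rightarrow> 'b \<Rightarrow> real \<Rightarrow> 'a" where
  "gen_sol S K u0 v0 v1 s =
     S s (u0 - K 0 v0) + K 0 (v0 + s *\<^sub>R v1) - integral {0..s} (\<lambda>\<sigma>. S \<sigma> (K 0 v1))"

end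

theory Submission
  imports Defs
begin


lemma sg_bound:
  assumes "of_type S \<omega>" "\<omega> < 0"
  shows "\<exists>M\<ge>0. \<forall>t\<ge>0. \<forall>x. norm (S t x) \<le> M * norm x"
proof -
  obtain M where M: "\<forall>t\<ge>0. \<forall>x. norm (S t x) \<le> M * exp (\<omega> * t) * norm x"
    using assms(1) unfolding of_type_def by blast
  have "norm (S t x) \<le> \<bar>M\<bar> * norm x" if "t \<ge> 0" for t x
  proof -
    have e: "exp (\<omega> * t) \<le> 1" using assms(2) that by (simp add: mult_nonpos_nonneg)
    have "norm (S t x) \<le> M * exp (\<omega> * t) * norm x" using M that by blast
    also have "\<dots> \<le> \<bar>M\<bar> * exp (\<omega> * t) * norm x"
      by (intro mult_right_mono) auto
    also have "\<dots> \<le> \<bar>M\<bar> * 1 * norm x"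
      by (intro mult_right_mono mult_left_mono e) auto
    finally show ?thesis by simp
  qed
  then show ?thesis by (intro exI[of _ "\<bar>M\<bar>"]) auto
qed

lemma sg_deriv:
  fixes S :: "real \<Rightarrow> 'a::banach \<Rightarrow> 'a"
  assumes gen: "generates D0 A S" and M: "\<And>t x. t \<ge> 0 \<Longrightarrow> norm (S t x) \<le> M * norm x" "M \<ge> 0"
    and z: "z \<in> D0" and t: "t \<ge> 0"
  shows "((\<lambda>s. S s z) has_vector_derivative S t (A z)) (at t within {0..})"
proof -
  have C0: "C0_semigroup S" and lim: "((\<lambda>h. (1 / h) *\<^sub>R (S h z - z)) \<longlongrightarrow> A z) (at_right 0)"
    using gen z unfolding generates_def by auto
  have lin: "\<And>s. s \<ge> 0 \<Longrightarrow> bounded_linear (S s)" and S0: "S 0 = id"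
    and Sadd: "\<And>s r. s \<ge> 0 \<Longrightarrow> r \<ge> 0 \<Longrightarrow> S (s + r) = S s \<circ> S r"
    and cont: "\<And>x. continuous_on {0..} (\<lambda>s. S s x)"
    using C0 unfolding C0_semigroup_def by auto
  show ?thesis
    unfolding has_vector_derivative_def has_derivative_within_alt
  proof (intro conjI bounded_linear_scaleR_left allI impI)
    fix e :: real assume e: "e > 0"
    define e1 where "e1 = e / (2 * (M + 1))"
    have e1: "e1 > 0" using e M(2) by (simp add: e1_def)
    have Me1: "M * e1 \<le> e / 2"
      using e M(2) by (simp add: e1_def field_simps)
    obtain d1 where d1: "d1 > 0" "\<And>h. 0 < h \<Longrightarrow> h < d1 \<Longrightarrow> norm ((1 / h) *\<^sub>R (S h z - z) - A z) < e1"
    proof -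
      have "eventually (\<lambda>h. dist ((1 / h) *\<^sub>R (S h z - z)) (A z) < e1) (at_right 0)"
        using lim e1 by (rule tendstoD)
      then obtain b where "b > 0" "\<And>h. h > 0 \<Longrightarrow> h < b \<Longrightarrow> dist ((1 / h) *\<^sub>R (S h z - z)) (A z) < e1"
        unfolding eventually_at_right_field by auto
      then show ?thesis using that by (auto simp: dist_norm)
    qed
    obtain d2 where d2: "d2 > 0" "\<And>y. y \<in> {0..} \<Longrightarrow> dist y t < d2 \<Longrightarrow> dist (S y (A z)) (S t (A z)) < e / 2"
      using cont[of "A z"] t e unfolding continuous_on_iff by (metis atLeast_iff half_gt_zero)
    show "\<exists>d>0. \<forall>y\<in>{0..}. norm (y - t) < d \<longrightarrow>
      norm (S y z - S t z - (y - t) *\<^sub>R S t (A z)) \<le> e * norm (y - t)"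
    proof (intro exI[of _ "min d1 d2"] conjI ballI impI)
      show "min d1 d2 > 0" using d1 d2 by auto
      fix y :: real assume y: "y \<in> {0..}" and yd: "norm (y - t) < min d1 d2"
      consider "y = t" | "y > t" | "y < t" by linarith
      then show "norm (S y z - S t z - (y - t) *\<^sub>R S t (A z)) \<le> e * norm (y - t)"
      proof cases
        case 1 then show ?thesis by simp
      next
        case 2
        define h where "h = y - t"
        have h: "h > 0" "h < d1" using 2 yd by (auto simp: h_def)
        have q: "norm ((1 / h) *\<^sub>R (S h z - z) - A z) < e1" using d1 h by auto
        have "S y z = S t (S h z)" using Sadd[of t h] t h by (simp add: h_def)
        then have "S y z - S t z - (y - t) *\<^sub>R S t (A z) = h *\<^sub>R S t ((1 / h) *\<^sub>R (S h z - z) - A z)"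
          using h linear_diff[OF bounded_linear.linear[OF lin[OF t]]] linear_scale[OF bounded_linear.linear[OF lin[OF t]]]
          by (simp add: h_def scaleR_diff_right)
        also have "norm \<dots> \<le> h * (M * e1)"
          using M(1)[OF t, of "(1 / h) *\<^sub>R (S h z - z) - A z"] q h M(2)
          by (simp, meson less_imp_le mult_left_mono order_trans)
        also have "\<dots> \<le> e * norm (y - t)" using Me1 h e by (simp add: h_def mult_left_mono)
        finally show ?thesis .
      next
        case 3
        define h where "h = t - y"
        have h: "h > 0" "h < d1" using 3 yd by (auto simp: h_def)
        have y0: "y \<ge> 0" using y by auto
        have q: "norm ((1 / h) *\<^sub>R (S h z - z) - A z) < e1" using d1 h by auto
        have cc: "norm (S y (A z) - S t (A z)) < e / 2" using d2(2)[OF y] yd by (auto simp: dist_norm)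
        have "S t z = S y (S h z)" using Sadd[of y h] y0 h by (simp add: h_def)
        then have "S y z - S t z - (y - t) *\<^sub>R S t (A z) =
            - (h *\<^sub>R S y ((1 / h) *\<^sub>R (S h z - z) - A z)) - h *\<^sub>R (S y (A z) - S t (A z))"
        proof -
          have L: "linear (S y)" using bounded_linear.linear[OF lin[OF y0]] .
          have "h *\<^sub>R S y ((1 / h) *\<^sub>R (S h z - z) - A z) = S y (S h z) - S y z - h *\<^sub>R S y (A z)"
            using h by (simp add: linear_diff[OF L] linear_scale[OF L] scaleR_diff_right)
          then show ?thesis using \<open>S t z = S y (S h z)\<close>
            by (simp add: h_def algebra_simps)
        qed
        also have "norm \<dots> \<le> h * (M * e1) + h * (e / 2)"
        proof -
          have "norm (S y ((1 / h) *\<^sub>R (S h z - z) - A z)) \<le> M * e1"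
            using M(1)[OF y0, of "(1 / h) *\<^sub>R (S h z - z) - A z"] q M(2)
            by (meson less_imp_le mult_left_mono order_trans)
          then show ?thesis using h cc
            by (smt (verit, ccfv_threshold) mult_left_mono norm_minus_cancel norm_scaleR norm_triangle_ineq4)
        qed
        also have "\<dots> \<le> e * norm (y - t)"
        proof -
          have "h * (M * e1) \<le> h * (e / 2)" using Me1 h by (intro mult_left_mono) auto
          moreover have "norm (y - t) = h" using h by (simp add: h_def)
          ultimately show ?thesis by (simp add: algebra_simps)
        qed
        finally show ?thesis .
      qed
    qed
  qed
qed



lemma sg_ftc:
  fixes S :: "real \<Rightarrow> 'a::banach \<Rightarrow> 'a"
  assumes gen: "generates D0 A S" and M: "\<And>t x. t \<ge> 0 \<Longrightarrow> norm (S t x) \<le> M * norm x" "M \<ge> 0"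
    and z: "z \<in> D0" and t: "t \<ge> 0"
  shows "((\<lambda>s. S s (A z)) has_integral (S t z - z)) {0..t}"
proof -
  have S0: "S 0 = id" using gen unfolding generates_def C0_semigroup_def by auto
  have "((\<lambda>s. S s (A z)) has_integral (S t z - S 0 z)) {0..t}"
    by (rule fundamental_theorem_of_calculus[OF t])
       (auto intro: has_vector_derivative_within_subset[OF sg_deriv[OF gen M z]])
  then show ?thesis using S0 by simp
qed

lemma sg_lip:
  fixes S :: "real \<Rightarrow> 'a::banach \<Rightarrow> 'a"
  assumes gen: "generates D0 A S" and M: "\<And>t x. t \<ge> 0 \<Longrightarrow> norm (S t x) \<le> M * norm x" "M \<ge> 0"
    and z: "z \<in> D0" and t: "t \<ge> 0"
  shows "norm (S t z - z) \<le> M * norm (A z) * t"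
proof -
  have cont: "continuous_on {0..t} (\<lambda>s. S s (A z))"
    using gen unfolding generates_def C0_semigroup_def
    by (meson atLeastAtMost_iff atLeast_iff continuous_on_subset subsetI)
  have "S t z - z = integral {0..t} (\<lambda>s. S s (A z))"
    using sg_ftc[OF gen M z t] by (simp add: integral_unique)
  also have "norm \<dots> \<le> (M * norm (A z)) * (t - 0)"
    by (rule integral_bound[OF t cont]) (use M in auto)
  finally show ?thesis by simp
qed

lemma lin_diff:
  assumes "linear_on_dom D L" "x \<in> D" "y \<in> D"
  shows "L (x - y) = L x - L y" and "x - y \<in> D"
proof -
  have sub: "subspace D" and add: "\<forall>x\<in>D. \<forall>y\<in>D. L (x + y) = L x + L y"
    and sc: "\<forall>c. \<forall>x\<in>D. L (c *\<^sub>R x) = c *\<^sub>R L x"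
    using assms(1) unfolding linear_on_dom_def by auto
  have my: "(-1) *\<^sub>R y \<in> D" using sub assms(3) by (simp add: subspace_neg)
  have "L (x + (-1) *\<^sub>R y) = L x + L ((-1) *\<^sub>R y)" using add assms my by blast
  also have "L ((-1) *\<^sub>R y) = (-1) *\<^sub>R L y" using sc assms(3) by blast
  finally show "L (x - y) = L x - L y" by simp
  show "x - y \<in> D" using sub assms by (simp add: subspace_diff)
qed

lemma lin_add:
  assumes "linear_on_dom D L" "x \<in> D" "y \<in> D"
  shows "L (x + y) = L x + L y" and "x + y \<in> D"
  using assms unfolding linear_on_dom_def by (auto simp: subspace_add)

lemma lin_scale:
  assumes "linear_on_dom D L" "x \<in> D"
  shows "L (c *\<^sub>R x) = c *\<^sub>R L x" and "c *\<^sub>R x \<in> D"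
  using assms unfolding linear_on_dom_def by (auto simp: subspace_scale)

lemma gen_est:
  fixes S :: "real \<Rightarrow> 'a::banach \<Rightarrow> 'a" and bd :: "'a \<Rightarrow> 'b::banach"
  assumes A_lin: "linear_on_dom DA A" and bd_lin: "linear_on_dom DA bd"
    and gen: "generates {x\<in>DA. bd x = 0} A S"
    and M: "\<And>t x. t \<ge> 0 \<Longrightarrow> norm (S t x) \<le> M * norm x" "M \<ge> 0"
    and Ksol: "\<And>v. K 0 v \<in> DA \<and> A (K 0 v) = 0 *\<^sub>R K 0 v \<and> bd (K 0 v) = v"
    and Kuniq: "\<And>v x. x \<in> DA \<Longrightarrow> A x = 0 *\<^sub>R x \<Longrightarrow> bd x = v \<Longrightarrow> x = K 0 v"
    and x: "x \<in> DA" "A x \<in> DA" and k: "k \<ge> 0"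
  shows "norm (gen_sol S K x (bd x) (bd (A x)) k - x - k *\<^sub>R A x) \<le> M * norm (A (A x)) * k^2"
proof -
  have KD: "K 0 v \<in> DA" and KA: "A (K 0 v) = 0" and Kbd: "bd (K 0 v) = v" for v
    using Ksol[of v] by auto
  have Kadd: "K 0 (a + b) = K 0 a + K 0 b" for a b
    by (rule sym, rule Kuniq) (auto simp: lin_add[OF A_lin KD KD] lin_add[OF bd_lin KD KD] KA Kbd)
  have Kscale: "K 0 (r *\<^sub>R a) = r *\<^sub>R K 0 a" for r a
    by (rule sym, rule Kuniq) (auto simp: lin_scale[OF A_lin KD] lin_scale[OF bd_lin KD] KA Kbd)
  define y where "y = A x"
  define gx where "gx = bd x"
  define gy where "gy = bd y"
  define c where "c = K 0 gy"
  define z0 where "z0 = x - K 0 gx"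
  define z1 where "z1 = y - c"
  have z0D: "z0 \<in> {x\<in>DA. bd x = 0}"
    using lin_diff[OF bd_lin x(1) KD] lin_diff[OF A_lin x(1) KD] by (auto simp: z0_def gx_def Kbd)
  have Az0: "A z0 = y" using lin_diff[OF A_lin x(1) KD] by (simp add: z0_def y_def KA)
  have yD: "y \<in> DA" using x by (simp add: y_def)
  have z1D: "z1 \<in> {x\<in>DA. bd x = 0}"
    using lin_diff[OF bd_lin yD KD] by (auto simp: z1_def c_def gy_def Kbd)
  have Az1: "A z1 = A (A x)" using lin_diff[OF A_lin yD KD] by (simp add: z1_def c_def y_def KA)
  have C0: "C0_semigroup S" using gen unfolding generates_def by auto
  have lin: "\<And>s. s \<ge> 0 \<Longrightarrow> bounded_linear (S s)"
    and cont: "\<And>v. continuous_on {0..} (\<lambda>s. S s v)"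
    using C0 unfolding C0_semigroup_def by auto
  have contk: "continuous_on {0..k} (\<lambda>s. S s v)" for v
    using cont[of v] by (rule continuous_on_subset) auto
  have Iy: "((\<lambda>s. S s y) has_integral (S k z0 - z0)) {0..k}"
    using sg_ftc[OF gen M z0D k] Az0 by simp
  have Ic: "((\<lambda>s. S s c) has_integral integral {0..k} (\<lambda>s. S s c)) {0..k}"
    using integrable_continuous_interval[OF contk] by (simp add: integrable_integral)
  have Iz: "((\<lambda>s. z1) has_integral k *\<^sub>R z1) {0..k}"
    using has_integral_const_real[of z1 0 k] k by simp
  have "((\<lambda>s. S s y - S s c - z1) has_integral (S k z0 - z0 - integral {0..k} (\<lambda>s. S s c) - k *\<^sub>R z1)) {0..k}"
    by (intro has_integral_diff Iy Ic Iz)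
  moreover have "S s y - S s c - z1 = S s z1 - z1" if "s \<in> {0..k}" for s
    using that linear_diff[OF bounded_linear.linear[OF lin[of s]]] by (auto simp: z1_def)
  ultimately have I: "((\<lambda>s. S s z1 - z1) has_integral (S k z0 - z0 - integral {0..k} (\<lambda>s. S s c) - k *\<^sub>R z1)) {0..k}"
    by (rule has_integral_eq[rotated]) auto
  have "norm (integral {0..k} (\<lambda>s. S s z1 - z1)) \<le> (M * norm (A z1) * k) * (k - 0)"
  proof (rule integral_bound[OF k])
    show "continuous_on {0..k} (\<lambda>s. S s z1 - z1)" by (intro continuous_intros contk)
    fix s assume s: "s \<in> {0..k}"
    have "norm (S s z1 - z1) \<le> M * norm (A z1) * s" using sg_lip[OF gen M z1D] s by auto
    also have "\<dots> \<le> M * norm (A z1) * k" using s M(2) by (intro mult_left_mono) auto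
    finally show "norm (S s z1 - z1) \<le> M * norm (A z1) * k" .
  qed
  moreover have "integral {0..k} (\<lambda>s. S s z1 - z1) = gen_sol S K x (bd x) (bd (A x)) k - x - k *\<^sub>R A x"
  proof -
    have "integral {0..k} (\<lambda>s. S s z1 - z1) = S k z0 - z0 - integral {0..k} (\<lambda>s. S s c) - k *\<^sub>R z1"
      using I by (simp add: integral_unique)
    also have "\<dots> = gen_sol S K x (bd x) (bd (A x)) k - x - k *\<^sub>R A x"
    proof -
      have "gen_sol S K x (bd x) (bd (A x)) k = S k z0 + K 0 gx + k *\<^sub>R c - integral {0..k} (\<lambda>s. S s c)"
        unfolding gen_sol_def by (simp add: Kadd Kscale z0_def c_def gx_def gy_def y_def)
      then show ?thesis unfolding z0_def z1_def y_def
        by (simp add: scaleR_diff_right)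
    qed
    finally show ?thesis .
  qed
  ultimately show ?thesis by (simp add: Az1 power2_eq_square algebra_simps)
qed



lemma vbound:
  fixes f :: "real \<Rightarrow> 'b::real_normed_vector"
  assumes ab: "a \<le> b" and d: "\<And>x. x\<in>{a..b} \<Longrightarrow> (f has_vector_derivative f' x) (at x within {a..b})"
    and B: "\<And>x. x\<in>{a..b} \<Longrightarrow> norm (f' x) \<le> B"
  shows "norm (f b - f a) \<le> 3 * B * (b - a)"
proof -
  have a: "a \<in> {a..b}" using ab by auto
  have "norm (f b - f a - (b - a) *\<^sub>R f' a) \<le> norm (b - a) * (2 * B)"
  proof (rule vector_differentiable_bound_linearization[OF d])
    show "closed_segment a b \<subseteq> {a..b}" using ab by (simp add: closed_segment_eq_real_ivl)
    fix x assume "x \<in> {a..b}"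
    then show "norm (f' x - f' a) \<le> 2 * B" using B[of x] B[OF a] norm_triangle_ineq4[of "f' x" "f' a"] by linarith
  qed (use a in auto)
  moreover have "norm ((b - a) *\<^sub>R f' a) \<le> (b - a) * B" using B[OF a] ab by (simp add: mult_left_mono)
  moreover have "norm (f b - f a) \<le> norm (f b - f a - (b - a) *\<^sub>R f' a) + norm ((b - a) *\<^sub>R f' a)"
    using norm_triangle_ineq[of "f b - f a - (b - a) *\<^sub>R f' a" "(b - a) *\<^sub>R f' a"] by simp
  moreover have "norm (b - a) = b - a" using ab by simp
  ultimately show ?thesis by (simp add: algebra_simps)
qed

lemma C1_cont: "C1_on I h \<Longrightarrow> continuous_on I h"
  unfolding C1_on_def continuous_on_eq_continuous_within
  by (meson has_vector_derivative_continuous)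

lemma tube:
  fixes f :: "real \<Rightarrow> 'a::real_normed_vector \<Rightarrow> 'a"
  assumes f: "C1_time_space T f" and u: "continuous_on {0..T} u"
  obtains e B where "e > 0" "B \<ge> 0"
    "\<And>t s1 x1 s2 x2. t \<in> {0..T} \<Longrightarrow> s1 \<in> {0..T} \<Longrightarrow> s2 \<in> {0..T} \<Longrightarrow>
       (s1, x1) \<in> ball (t, u t) e \<Longrightarrow> (s2, x2) \<in> ball (t, u t) e \<Longrightarrow>
       norm (f s1 x1 - f s2 x2) \<le> B * (\<bar>s1 - s2\<bar> + norm (x1 - x2))"
proof -
  define D where "D = {0..T} \<times> (UNIV :: 'a set)"
  obtain f' :: "real \<times> 'a \<Rightarrow> (real \<times> 'a) \<Rightarrow>\<^sub>L 'a" where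
    fd: "\<And>p. p \<in> D \<Longrightarrow> ((\<lambda>(t, x). f t x) has_derivative blinfun_apply (f' p)) (at p within D)"
    and fc: "continuous_on D f'"
    using f unfolding C1_time_space_def D_def by blast
  define \<Gamma> where "\<Gamma> = (\<lambda>t. (t, u t)) ` {0..T}"
  have cG: "compact \<Gamma>" unfolding \<Gamma>_def
    by (intro compact_continuous_image continuous_on_Pair continuous_on_id u) auto
  have GD: "\<Gamma> \<subseteq> D" by (auto simp: \<Gamma>_def D_def)
  have "compact (f' ` \<Gamma>)"
    by (intro compact_continuous_image cG continuous_on_subset[OF fc GD])
  then have "bounded (f' ` \<Gamma>)" by (rule compact_imp_bounded)
  then obtain B0 where B0': "\<forall>y\<in>f' ` \<Gamma>. norm y \<le> B0" unfolding bounded_iff by blast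
  have B0: "\<And>p. p \<in> \<Gamma> \<Longrightarrow> norm (f' p) \<le> B0" using B0' by blast
  define \<G> where "\<G> = {V. open V \<and> (\<forall>p\<in>V \<inter> D. norm (f' p) \<le> B0 + 1)}"
  have cover: "\<Gamma> \<subseteq> \<Union>\<G>"
  proof
    fix q assume q: "q \<in> \<Gamma>"
    then have qD: "q \<in> D" using GD by auto
    obtain d where d: "d > 0" "\<And>p. p \<in> D \<Longrightarrow> dist p q < d \<Longrightarrow> dist (f' p) (f' q) < 1"
      using fc qD unfolding continuous_on_iff by (meson zero_less_one)
    have "ball q d \<in> \<G>"
    proof -
      have "norm (f' p) \<le> B0 + 1" if "p \<in> ball q d \<inter> D" for p
      proof -
        have "dist (f' p) (f' q) < 1" using d that by (auto simp: dist_commute)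
        then show ?thesis using B0[OF q] norm_triangle_ineq2[of "f' p" "f' q"]
          by (simp add: dist_norm)
      qed
      then show ?thesis by (auto simp: \<G>_def)
    qed
    then show "q \<in> \<Union>\<G>" using d(1) by (intro UnionI[of "ball q d"]) auto
  qed
  obtain e where e: "e > 0" "\<And>q. q \<in> \<Gamma> \<Longrightarrow> \<exists>G\<in>\<G>. ball q e \<subseteq> G"
    using Heine_Borel_lemma[OF cG cover] by (auto simp: \<G>_def)
  define B where "B = max B0 0 + 1"
  show ?thesis
  proof (rule that[of e B])
    show "e > 0" "B \<ge> 0" using e by (auto simp: B_def)
    fix t s1 x1 s2 x2
    assume t: "t \<in> {0..T}" and s: "s1 \<in> {0..T}" "s2 \<in> {0..T}"
      and p: "(s1, x1) \<in> ball (t, u t) e" "(s2, x2) \<in> ball (t, u t) e"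
    have q: "(t, u t) \<in> \<Gamma>" using t by (auto simp: \<Gamma>_def)
    define W where "W = ball (t, u t) e \<inter> D"
    have Wb: "\<And>p. p \<in> W \<Longrightarrow> norm (f' p) \<le> B"
    proof -
      fix p assume pW: "p \<in> W"
      obtain G where G: "G \<in> \<G>" "ball (t, u t) e \<subseteq> G" using e(2)[OF q] by blast
      have "p \<in> G \<inter> D" using pW G(2) by (auto simp: W_def)
      then have "norm (f' p) \<le> B0 + 1" using G(1) by (auto simp: \<G>_def)
      then show "norm (f' p) \<le> B" by (simp add: B_def)
    qed
    have cW: "convex W" unfolding W_def D_def
      by (intro convex_Int convex_ball convex_Times convex_UNIV) auto
    have "norm ((\<lambda>(t, x). f t x) (s1, x1) - (\<lambda>(t, x). f t x) (s2, x2)) \<le> B * norm ((s1, x1) - (s2, x2))"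
    proof (rule differentiable_bound[OF cW])
      fix p assume "p \<in> W"
      then show "((\<lambda>(t, x). f t x) has_derivative blinfun_apply (f' p)) (at p within W)"
        using has_derivative_subset[OF fd[of p]] by (auto simp: W_def)
      show "onorm (blinfun_apply (f' p)) \<le> B" using Wb[OF \<open>p \<in> W\<close>] by (simp add: norm_blinfun.rep_eq)
    qed (use p s in \<open>auto simp: W_def D_def\<close>)
    also have "\<dots> \<le> B * (\<bar>s1 - s2\<bar> + norm (x1 - x2))"
      using norm_Pair_le[of "s1 - s2" "x1 - x2"] by (auto simp: B_def intro!: mult_left_mono)
    finally show "norm (f s1 x1 - f s2 x2) \<le> B * (\<bar>s1 - s2\<bar> + norm (x1 - x2))" by simp
  qed
qed

lemma cont_bound:
  fixes h :: "real \<Rightarrow> 'b::real_normed_vector"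
  assumes "continuous_on {a..b} h"
  obtains B where "B \<ge> 0" "\<And>t. t \<in> {a..b} \<Longrightarrow> norm (h t) \<le> B"
proof -
  have "compact (h ` {a..b})" by (intro compact_continuous_image assms) auto
  then have "bounded (h ` {a..b})" by (rule compact_imp_bounded)
  then obtain B where "B > 0" "\<forall>y\<in>h ` {a..b}. norm y \<le> B" unfolding bounded_pos by blast
  then show ?thesis using that[of B] by auto
qed



theorem theorem3p2:
  fixes A :: "'a::banach \<Rightarrow> 'a" and DA :: "'a set"
    and bd :: "'a \<Rightarrow> 'b::banach"
    and S :: "real \<Rightarrow> 'a \<Rightarrow> 'a" and \<omega> :: real
    and K :: "real \<Rightarrow> 'b \<Rightarrow> 'a"
    and f :: "real \<Rightarrow> 'a \<Rightarrow> 'a" and g :: "real \<Rightarrow> 'b"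
    and u :: "real \<Rightarrow> 'a" and u0 :: 'a and T :: real
    and Psi :: "real \<Rightarrow> real \<Rightarrow> 'a \<Rightarrow> 'a" and p :: nat
  assumes T_pos: "T > 0"
    and A_lin: "linear_on_dom DA A"
    and bd_lin: "linear_on_dom DA bd"
    \<comment> \<open>(A1)\<close>
    and A1: "bd ` DA = UNIV"
    \<comment> \<open>(A2)\<close>
    and A2_dense: "closure {x\<in>DA. bd x = 0} = UNIV"
    and A2_gen: "generates {x\<in>DA. bd x = 0} A S"
    and A2_type: "\<omega> < 0" "of_type S \<omega>"
    \<comment> \<open>(A3), with real spectral parameter z\<close>
    and A3_sol: "\<And>z v. z > \<omega> \<Longrightarrow> K z v \<in> DA \<and> A (K z v) = z *\<^sub>R K z v \<and> bd (K z v) = v"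
    and A3_uniq: "\<And>z v x. z > \<omega> \<Longrightarrow> x \<in> DA \<Longrightarrow> A x = z *\<^sub>R x \<Longrightarrow> bd x = v \<Longrightarrow> x = K z v"
    and A3_bound: "\<And>\<omega>0. \<omega>0 > \<omega> \<Longrightarrow> \<exists>C. \<forall>z\<ge>\<omega>0. \<forall>v. norm (K z v) \<le> C * norm v"
    \<comment> \<open>(A4)\<close>
    and A4: "C1_time_space T f"
    \<comment> \<open>u solves the problem\<close>
    and u_DA: "\<And>t. t \<in> {0..T} \<Longrightarrow> u t \<in> DA"
    and u_ode: "\<And>t. t \<in> {0..T} \<Longrightarrow>
                 (u has_vector_derivative (A (u t) + f t (u t))) (at t within {0..T})"
    and u_init: "u 0 = u0"
    and u_bd: "\<And>t. t \<in> {0..T} \<Longrightarrow> bd (u t) = g t"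
    \<comment> \<open>(A5)\<close>
    and A5_C2: "C2_on {0..T} u"
    and A5_dom: "\<And>t. t \<in> {0..T} \<Longrightarrow> A (u t) \<in> DA"
    and A5_Au: "C1_on {0..T} (\<lambda>t. A (u t))"
    and A5_AAu: "C1_on {0..T} (\<lambda>t. A (A (u t)))"
    \<comment> \<open>(A6)\<close>
    and A6_dom: "\<And>t. t \<in> {0..T} \<Longrightarrow> f t (u t) \<in> DA"
    and A6_cont: "continuous_on {0..T} (\<lambda>t. A (f t (u t)))"
    \<comment> \<open>the integrator has order p \<ge> 1 for w' = f(t_n + s, w(s)), started from the values considered\<close>
    and p_ge: "p \<ge> 1"
    and order: "\<exists>C k0. k0 > 0 \<and> (\<forall>k n. 0 < k \<and> k \<le> k0 \<and> real (Suc n) * k \<le> T \<longrightarrow>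
         (\<exists>w. w 0 = gen_sol S K (u (real n * k)) (bd (u (real n * k))) (bd (A (u (real n * k)))) k \<and>
              (\<forall>s\<in>{0..k}. (w has_vector_derivative f (real n * k + s) (w s)) (at s within {0..k})) \<and>
              norm (Psi k (real n * k) (w 0) - w k) \<le> C * k ^ (p + 1)))"
  shows "\<exists>C k0. k0 > 0 \<and> (\<forall>k n. 0 < k \<and> k \<le> k0 \<and> real (Suc n) * k \<le> T \<longrightarrow>
           norm (Psi k (real n * k)
                   (gen_sol S K (u (real n * k)) (bd (u (real n * k))) (bd (A (u (real n * k)))) k)
                 - u (real (Suc n) * k)) \<le> C * k ^ 2)"
proof -
  have w0: "\<omega> < 0" using A2_type(1) .
  obtain M where M0: "M \<ge> 0" and M: "\<And>t x. t \<ge> 0 \<Longrightarrow> norm (S t x) \<le> M * norm x"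
    using sg_bound[OF A2_type(2) A2_type(1)] by blast
  have Ksol: "\<And>v. K 0 v \<in> DA \<and> A (K 0 v) = 0 *\<^sub>R K 0 v \<and> bd (K 0 v) = v"
    using A3_sol w0 by blast
  have Kuniq: "\<And>v x. x \<in> DA \<Longrightarrow> A x = 0 *\<^sub>R x \<Longrightarrow> bd x = v \<Longrightarrow> x = K 0 v"
    using A3_uniq w0 by blast
  obtain u' where ud: "\<And>t. t \<in> {0..T} \<Longrightarrow> (u has_vector_derivative u' t) (at t within {0..T})"
    and u'C1: "C1_on {0..T} u'"
    using A5_C2 unfolding C2_on_def by blast
  obtain u'' where u''d: "\<And>t. t \<in> {0..T} \<Longrightarrow> (u' has_vector_derivative u'' t) (at t within {0..T})"
    and u''c: "continuous_on {0..T} u''"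
    using u'C1 unfolding C1_on_def by blast
  have u'c: "continuous_on {0..T} u'" using C1_cont[OF u'C1] .
  have uC1: "C1_on {0..T} u" unfolding C1_on_def using ud u'c by blast
  have uc: "continuous_on {0..T} u" using C1_cont[OF uC1] .
  have u'eq: "u' t = A (u t) + f t (u t)" if t: "t \<in> {0..T}" for t
    using vector_derivative_unique_within_closed_interval[of 0 T t u "u' t" "A (u t) + f t (u t)"]
      T_pos t ud[OF t] u_ode[OF t] by simp
  have Auc: "continuous_on {0..T} (\<lambda>t. A (u t))" using C1_cont[OF A5_Au] .
  have fuc: "continuous_on {0..T} (\<lambda>t. f t (u t))"
  proof -
    have "continuous_on {0..T} (\<lambda>t. u' t - A (u t))" by (intro continuous_on_diff u'c Auc)
    then show ?thesis by (rule continuous_on_eq) (simp add: u'eq)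
  qed
  obtain MA2 where MA2: "MA2 \<ge> 0" "\<And>t. t \<in> {0..T} \<Longrightarrow> norm (A (A (u t))) \<le> MA2"
    using cont_bound[OF C1_cont[OF A5_AAu]] by blast
  obtain MA1 where MA1: "MA1 \<ge> 0" "\<And>t. t \<in> {0..T} \<Longrightarrow> norm (A (u t)) \<le> MA1"
    using cont_bound[OF Auc] by blast
  obtain M2 where M2: "M2 \<ge> 0" "\<And>t. t \<in> {0..T} \<Longrightarrow> norm (u'' t) \<le> M2"
    using cont_bound[OF u''c] by blast
  obtain Fu where Fu: "Fu \<ge> 0" "\<And>t. t \<in> {0..T} \<Longrightarrow> norm (f t (u t)) \<le> Fu"
    using cont_bound[OF fuc] by blast
  obtain e B where e: "e > 0" and B: "B \<ge> 0"
    and tb: "\<And>t s1 x1 s2 x2. t \<in> {0..T} \<Longrightarrow> s1 \<in> {0..T} \<Longrightarrow> s2 \<in> {0..T} \<Longrightarrow>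
       (s1, x1) \<in> ball (t, u t) e \<Longrightarrow> (s2, x2) \<in> ball (t, u t) e \<Longrightarrow>
       norm (f s1 x1 - f s2 x2) \<le> B * (\<bar>s1 - s2\<bar> + norm (x1 - x2))"
    using tube[OF A4 uc] by blast
  obtain Cp kp where kp: "kp > 0" and ord: "\<And>k n. 0 < k \<Longrightarrow> k \<le> kp \<Longrightarrow> real (Suc n) * k \<le> T \<Longrightarrow>
         (\<exists>w. w 0 = gen_sol S K (u (real n * k)) (bd (u (real n * k))) (bd (A (u (real n * k)))) k \<and>
              (\<forall>s\<in>{0..k}. (w has_vector_derivative f (real n * k + s) (w s)) (at s within {0..k})) \<and>
              norm (Psi k (real n * k) (w 0) - w k) \<le> Cp * k ^ (p + 1))"
    using order by blast
  define c1 where "c1 = MA1 + M * MA2"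
  define F where "F = Fu + B * e"
  have c1: "c1 \<ge> 0" using MA1 M0 MA2 by (simp add: c1_def)
  have F: "F \<ge> 0" using Fu B e by (simp add: F_def)
  define k0 where "k0 = min 1 (min kp (e / (4 * (1 + c1 + F))))"
  define C where "C = Cp + B * (1 + 3 * F) + B * c1 + M * MA2 + 3 * M2"
  show ?thesis
  proof (intro exI conjI allI impI)
    show "k0 > 0" using kp e c1 F by (simp add: k0_def)
    fix k :: real and n :: nat
    assume kn: "0 < k \<and> k \<le> k0 \<and> real (Suc n) * k \<le> T"
    then have k: "0 < k" "k \<le> 1" "k \<le> kp" "k \<le> e / (4 * (1 + c1 + F))" and nT: "real (Suc n) * k \<le> T"
      by (auto simp: k0_def)
    have ksmall: "k * (1 + c1 + F) \<le> e / 4"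
      using k(4) c1 F by (simp add: field_simps)
    have ksq: "k^2 \<le> k" using k by (simp add: power2_eq_square mult_left_le)
    define tn where "tn = real n * k"
    have tnk: "real (Suc n) * k = tn + k" by (simp add: tn_def algebra_simps)
    have tn: "tn \<in> {0..T}" "tn + k \<le> T" "tn \<ge> 0" using nT k tnk by (auto simp: tn_def)
    define x where "x = u tn"
    define y where "y = A x"
    define w0 where "w0 = gen_sol S K (u tn) (bd (u tn)) (bd (A (u tn))) k"
    have E1: "norm (w0 - x - k *\<^sub>R y) \<le> M * MA2 * k^2"
    proof -
      have "norm (w0 - x - k *\<^sub>R y) \<le> M * norm (A (A x)) * k^2"
        unfolding w0_def x_def y_def
        by (rule gen_est[where M=M and S=S and K=K and DA=DA and A=A and bd=bd and x="u tn" and k=k, OF A_lin bd_lin A2_gen M M0 Ksol Kuniq u_DA[OF tn(1)] A5_dom[OF tn(1)]]) (use k in auto)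
      also have "\<dots> \<le> M * MA2 * k^2" using MA2 tn M0 by (auto simp: x_def intro!: mult_right_mono mult_left_mono)
      finally show ?thesis .
    qed
    have w0x: "norm (w0 - x) \<le> c1 * k"
    proof -
      have a: "norm (w0 - x) \<le> norm (w0 - x - k *\<^sub>R y) + norm (k *\<^sub>R y)"
        using norm_triangle_ineq[of "w0 - x - k *\<^sub>R y" "k *\<^sub>R y"] by simp
      have b: "norm (k *\<^sub>R y) \<le> k * MA1" using MA1(2)[OF tn(1)] k by (simp add: y_def x_def mult_left_mono)
      have c: "M * MA2 * k^2 \<le> M * MA2 * k" using ksq M0 MA2 by (simp add: mult_left_mono)
      show ?thesis using a b c E1 by (simp add: c1_def algebra_simps)
    qed
    obtain w where ww0: "w 0 = w0"
      and wd: "\<And>s. s \<in> {0..k} \<Longrightarrow> (w has_vector_derivative f (tn + s) (w s)) (at s within {0..k})"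
      and E4: "norm (Psi k tn w0 - w k) \<le> Cp * k ^ (p + 1)"
      using ord[of k n] k nT unfolding w0_def tn_def by auto
    have kle: "k \<le> e / 4"
    proof -
      have "0 \<le> k * c1 + k * F" using k c1 F by simp
      then have "k \<le> k * (1 + c1 + F)" by (simp add: algebra_simps)
      then show ?thesis using ksmall by linarith
    qed
    have inball: "(tn + s, z) \<in> ball (tn, u tn) e" if "s \<in> {0..k}" "norm (z - x) < e / 2" for s z
    proof -
      have "(tn, u tn) - (tn + s, z) = (- s, x - z)" by (simp add: x_def)
      then have "dist (tn, u tn) (tn + s, z) \<le> norm (- s) + norm (x - z)"
        by (metis dist_norm norm_Pair_le)
      also have "\<dots> < e" using that kle by (simp add: norm_minus_commute)
      finally show ?thesis by simp
    qed
    have tbl: "norm (f (tn + s1) z1 - f (tn + s2) z2) \<le> B * (\<bar>s1 - s2\<bar> + norm (z1 - z2))"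
      if "s1 \<in> {0..k}" "s2 \<in> {0..k}" "norm (z1 - x) < e / 2" "norm (z2 - x) < e / 2" for s1 z1 s2 z2
    proof -
      have "norm (f (tn + s1) z1 - f (tn + s2) z2) \<le> B * (\<bar>tn + s1 - (tn + s2)\<bar> + norm (z1 - z2))"
      proof (rule tb[OF tn(1)])
        show "(tn + s1, z1) \<in> ball (tn, u tn) e" by (rule inball) (use that in auto)
        show "(tn + s2, z2) \<in> ball (tn, u tn) e" by (rule inball) (use that in auto)
      qed (use that tn in auto)
      then show ?thesis by simp
    qed
    have fF: "norm (f (tn + s) z) \<le> F" if "s \<in> {0..k}" "norm (z - x) < e / 2" for s z
    proof -
      have x0: "norm (x - x) < e / 2" using e by simp
      have "norm (f (tn + s) z - f (tn + 0) x) \<le> B * (\<bar>s - 0\<bar> + norm (z - x))"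
        using tbl[OF that(1) _ that(2) x0, of 0] k by simp
      also have "\<dots> \<le> B * e" using that kle B by (intro mult_left_mono) auto
      finally have "norm (f (tn + s) z - f tn x) \<le> B * e" by simp
      moreover have "norm (f tn x) \<le> Fu" using Fu(2)[OF tn(1)] by (simp add: x_def)
      ultimately show ?thesis unfolding F_def using norm_triangle_ineq2[of "f (tn + s) z" "f tn x"] by linarith
    qed
    have wc: "continuous_on {0..k} w"
      unfolding continuous_on_eq_continuous_within using wd has_vector_derivative_continuous by blast
    have inT: "norm (w s - x) < e / 2" if s: "s \<in> {0..k}" for s
    proof (rule ccontr)
      assume "\<not> norm (w s - x) < e / 2"
      define E where "E = {0..k} \<inter> (\<lambda>r. norm (w r - x)) -` {e / 2..}"
      have sE: "s \<in> E" using s \<open>\<not> norm (w s - x) < e / 2\<close> by (auto simp: E_def)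
      have cE: "closed E" unfolding E_def
        by (intro continuous_closed_preimage continuous_intros wc closed_atLeastAtMost closed_atLeast)
      have bE: "bdd_below E" by (auto simp: E_def bdd_below_def)
      define s1 where "s1 = Inf E"
      have s1E: "s1 \<in> E" unfolding s1_def using closed_contains_Inf[OF _ bE cE] sE by blast
      have below: "norm (w r - x) < e / 2" if "r \<in> {0..k}" "r < s1" for r
      proof (rule ccontr)
        assume "\<not> norm (w r - x) < e / 2"
        then have "r \<in> E" using that by (auto simp: E_def)
        then have "s1 \<le> r" unfolding s1_def using bE by (rule cInf_lower)
        then show False using that by simp
      qed
      have w0small: "norm (w 0 - x) < e / 2"
      proof -
        have "c1 * k \<le> k * (1 + c1 + F)" using k c1 F by (simp add: algebra_simps)
        then show ?thesis using w0x ksmall e unfolding ww0 by linarith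
      qed
      have s1k: "0 \<le> s1" "s1 \<le> k" using s1E by (auto simp: E_def)
      have s1pos: "0 < s1"
      proof (rule ccontr)
        assume "\<not> 0 < s1"
        then have "s1 = 0" using s1k by simp
        then show False using s1E w0small by (auto simp: E_def)
      qed
      have "norm (w s1 - w 0) \<le> F * s1 - F * 0"
      proof (rule differentiable_bound_general[OF s1pos])
        show "continuous_on {0..s1} w" using wc by (rule continuous_on_subset) (use s1k in auto)
        show "continuous_on {0..s1} (\<lambda>r. F * r)" by (intro continuous_intros)
        fix r assume r: "0 < r" "r < s1"
        have rk: "r \<in> {0..k}" using r s1k by auto
        have "at r within {0..k} = at r" using r s1k by (intro at_within_Icc_at) auto
        then show "(w has_vector_derivative f (tn + r) (w r)) (at r)" using wd[OF rk] by simp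
        show "((\<lambda>r. F * r) has_vector_derivative F) (at r)"
          using has_vector_derivative_const has_real_derivative_iff_has_vector_derivative
          by (metis DERIV_cmult_Id)
        show "norm (f (tn + r) (w r)) \<le> F" using fF[OF rk below[OF rk r(2)]] .
      qed
      moreover have "F * s1 \<le> F * k" using F s1k by (simp add: mult_left_mono)
      ultimately have "norm (w s1 - w 0) \<le> F * k" by simp
      then have "norm (w s1 - x) \<le> F * k + c1 * k"
        using w0x ww0 norm_triangle_ineq[of "w s1 - w 0" "w 0 - x"] by simp
      also have "\<dots> \<le> e / 4" using ksmall k by (simp add: algebra_simps)
      finally show False using s1E e by (auto simp: E_def)
    qed
    show "norm (Psi k (real n * k) (gen_sol S K (u (real n * k)) (bd (u (real n * k))) (bd (A (u (real n * k)))) k)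
         - u (real (Suc n) * k)) \<le> C * k ^ 2"
    proof -
      have w0s: "norm (w0 - x) < e / 2" using inT[of 0] k unfolding ww0 by simp
      have wb: "norm (w s - w 0) \<le> 3 * F * s" if s: "s \<in> {0..k}" for s
      proof -
        have "norm (w s - w 0) \<le> 3 * F * (s - 0)"
        proof (rule vbound)
          fix r assume r: "r \<in> {0..s}"
          then have rk: "r \<in> {0..k}" using s by auto
          show "(w has_vector_derivative f (tn + r) (w r)) (at r within {0..s})"
            by (rule has_vector_derivative_within_subset[OF wd[OF rk]]) (use s in auto)
          show "norm (f (tn + r) (w r)) \<le> F" by (rule fF[OF rk inT[OF rk]])
        qed (use s in auto)
        then show ?thesis by simp
      qed
      have E3: "norm (w k - w 0 - (k - 0) *\<^sub>R f (tn + 0) (w 0)) \<le> norm (k - 0) * (B * (k + 3 * F * k))"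
      proof (rule vector_differentiable_bound_linearization[where S="{0..k}"])
        show "\<And>s. s \<in> {0..k} \<Longrightarrow> (w has_vector_derivative f (tn + s) (w s)) (at s within {0..k})" by (rule wd)
        show "closed_segment 0 k \<subseteq> {0..k}" using k by (simp add: closed_segment_eq_real_ivl)
        show "(0::real) \<in> {0..k}" using k by simp
        fix s assume s: "s \<in> {0..k}"
        have "norm (f (tn + s) (w s) - f (tn + 0) (w 0)) \<le> B * (\<bar>s - 0\<bar> + norm (w s - w 0))"
          by (rule tbl[OF s _ inT[OF s] inT]) (use k in auto)
        also have "\<dots> \<le> B * (k + 3 * F * k)"
        proof -
          have "3 * F * s \<le> 3 * F * k" using F s by (simp add: mult_left_mono)
          then show ?thesis using wb[OF s] s B by (intro mult_left_mono) auto
        qed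
        finally show "norm (f (tn + s) (w s) - f (tn + 0) (w 0)) \<le> B * (k + 3 * F * k)" .
      qed
      have fdiff: "norm (f tn w0 - f tn x) \<le> B * (c1 * k)"
      proof -
        have "norm (f (tn + 0) w0 - f (tn + 0) x) \<le> B * (\<bar>0 - 0\<bar> + norm (w0 - x))"
          by (rule tbl[OF _ _ w0s]) (use k e in auto)
        also have "\<dots> \<le> B * (c1 * k)" using w0x B by (simp add: mult_left_mono)
        finally show ?thesis by simp
      qed
      have sub: "{tn..tn + k} \<subseteq> {0..T}" using tn by auto
      have E2: "norm (u (tn + k) - u tn - (tn + k - tn) *\<^sub>R u' tn) \<le> norm (tn + k - tn) * (3 * M2 * k)"
      proof (rule vector_differentiable_bound_linearization[where S="{tn..tn+k}"])
        show "\<And>s. s \<in> {tn..tn+k} \<Longrightarrow> (u has_vector_derivative u' s) (at s within {tn..tn+k})"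
          using sub by (intro has_vector_derivative_within_subset[OF ud]) auto
        show "closed_segment tn (tn + k) \<subseteq> {tn..tn+k}" using k by (simp add: closed_segment_eq_real_ivl)
        show "tn \<in> {tn..tn+k}" using k by simp
        fix s assume s: "s \<in> {tn..tn+k}"
        have "norm (u' s - u' tn) \<le> 3 * M2 * (s - tn)"
        proof (rule vbound)
          fix r assume r: "r \<in> {tn..s}"
          then have rT: "r \<in> {0..T}" using s sub by auto
          show "(u' has_vector_derivative u'' r) (at r within {tn..s})"
            by (rule has_vector_derivative_within_subset[OF u''d[OF rT]]) (use s sub in auto)
          show "norm (u'' r) \<le> M2" by (rule M2(2)[OF rT])
        qed (use s in auto)
        also have "\<dots> \<le> 3 * M2 * k" using s M2 by (intro mult_left_mono) auto
        finally show "norm (u' s - u' tn) \<le> 3 * M2 * k" .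
      qed
      have kp1: "k ^ (p + 1) \<le> k^2" using k p_ge by (intro power_decreasing) auto
      have Cp0: "Cp \<ge> 0"
      proof -
        have "0 \<le> Cp * k ^ (p + 1)" using E4 norm_ge_zero order_trans by blast
        moreover have "k ^ (p + 1) > 0" using k by simp
        ultimately show ?thesis by (simp add: zero_le_mult_iff)
      qed
      have E4': "norm (Psi k tn w0 - w k) \<le> Cp * k^2"
        using E4 mult_left_mono[OF kp1 Cp0] by linarith
      have u'tn: "u' tn = y + f tn x" using u'eq[OF tn(1)] by (simp add: x_def y_def)
      define a1 where "a1 = Psi k tn w0 - w k"
      define a2 where "a2 = w k - w 0 - (k - 0) *\<^sub>R f (tn + 0) (w 0)"
      define a3 where "a3 = k *\<^sub>R (f tn w0 - f tn x)"
      define a4 where "a4 = w0 - x - k *\<^sub>R y"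
      define a5 where "a5 = u (tn + k) - u tn - (tn + k - tn) *\<^sub>R u' tn"
      have id: "Psi k tn w0 - u (tn + k) = a1 + a2 + a3 + a4 - a5"
        unfolding a1_def a2_def a3_def a4_def a5_def u'tn ww0 x_def
        by (simp add: algebra_simps)
      have n3: "norm a3 \<le> k * (B * (c1 * k))" using fdiff k by (simp add: a3_def mult_left_mono)
      have "norm (a1 + a2 + a3 + a4 - a5) \<le> norm a1 + norm a2 + norm a3 + norm a4 + norm a5"
        by (smt (verit) norm_triangle_ineq norm_triangle_ineq4)
      also have "\<dots> \<le> Cp * k^2 + k * (B * (k + 3 * F * k)) + k * (B * (c1 * k)) + M * MA2 * k^2 + k * (3 * M2 * k)"
        using E4' E3 n3 E1 E2 k unfolding a1_def a2_def a4_def a5_def by simp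
      also have "\<dots> = C * k^2" by (simp add: C_def power2_eq_square algebra_simps)
      finally have "norm (Psi k tn w0 - u (tn + k)) \<le> C * k^2" using id by simp
      then show ?thesis unfolding tnk by (simp add: tn_def w0_def)
    qed
  qed
qed

end
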